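(* Let $S$ be an inverse semigroup and $\mathcal M$ a quasi-generating set for $S$. Then $d_{\mathcal M\cup E(S)}=d_{\mathcal M}$, and for all $s,t\in S$, $$d_{\mathcal M}(s,t)=\begin{cases}\min\{k\ge 0\mid \exists\, m_1,\dots,m_k\in\mathcal M \text{ with } s=m_1\cdots m_k t\} & \text{if }(s,t)\in\mathcal L,\\ \infty & \text{if }(s,t)\notin\mathcal L\end{cases}$$ (with $k=0$ meaning $s=t$).
   Context: An inverse semigroup is a semigroup $S$ in which every $s$ has a unique $s^{-1}\in S$ with $ss^{-1}s=s$ and $s^{-1}ss^{-1}=s^{-1}$. $E(S)$ is the set of idempotents. Green's relation $\mathcal L$: $(s,t)\in\mathcal L$ iff $s^{-1}s=t^{-1}t$. A quasi-generating set is a subset $\mathcal G\subseteq S$ with $\mathcal G=\mathcal G^{-1}$ such that $S$ is generated as a semigroup by $\mathcal G\cup E(S)$. For a quasi-generating set $\mathcal G$, the Cayley metric $d_{\mathcal G}$ on $S$ is defined by $d_{\mathcal G}(s,t)=\infty$ if $(s,t)\notin\mathcal L$, and otherwise as the path distance from $s$ to $t$ in the graph whose vertices are the elements of the $\mathcal L$-class of $s$, with $u,v$ joined by an edge of length 1 whenever $gu=v$ for some $g\in\mathcal G$. *)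

theory Defs
  imports Main "HOL-Library.Extended_Nat"
begin

definition inverse_semigroup :: "('a \<Rightarrow> 'a \<Rightarrow> 'a) \<Rightarrow> bool" where
  "inverse_semigroup mult \<longleftrightarrow>
     (\<forall>a b c. mult (mult a b) c = mult a (mult b c)) \<and>
     (\<forall>s. \<exists>!t. mult (mult s t) s = s \<and> mult (mult t s) t = t)"

definition sinv :: "('a \<Rightarrow> 'a \<Rightarrow> 'a) \<Rightarrow> 'a \<Rightarrow> 'a" where
  "sinv mult s = (THE t. mult (mult s t) s = s \<and> mult (mult t s) t = t)"

definition idems :: "('a \<Rightarrow> 'a \<Rightarrow> 'a) \<Rightarrow> 'a set" where
  "idems mult = {e. mult e e = e}"

definition Lrel :: "('a \<Rightarrow> 'a \<Rightarrow> 'a) \<Rightarrow> 'a \<Rightarrow> 'a \<Rightarrow> bool" where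
  "Lrel mult s t \<longleftrightarrow> mult (sinv mult s) s = mult (sinv mult t) t"

inductive_set generated :: "('a \<Rightarrow> 'a \<Rightarrow> 'a) \<Rightarrow> 'a set \<Rightarrow> 'a set"
  for mult :: "'a \<Rightarrow> 'a \<Rightarrow> 'a" and X :: "'a set" where
  gen_base: "x \<in> X \<Longrightarrow> x \<in> generated mult X"
| gen_mult: "a \<in> generated mult X \<Longrightarrow> b \<in> generated mult X \<Longrightarrow> mult a b \<in> generated mult X"

definition quasi_generating :: "('a \<Rightarrow> 'a \<Rightarrow> 'a) \<Rightarrow> 'a set \<Rightarrow> bool" where
  "quasi_generating mult G \<longleftrightarrow>
     sinv mult ` G = G \<and> generated mult (G \<union> idems mult) = UNIV"

definition cayley_adj :: "('a \<Rightarrow> 'a \<Rightarrow> 'a) \<Rightarrow> 'a set \<Rightarrow> 'a \<Rightarrow> 'a \<Rightarrow> 'a \<Rightarrow> bool" where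
  "cayley_adj mult G s u v \<longleftrightarrow> Lrel mult s u \<and> Lrel mult s v \<and>
     (\<exists>g\<in>G. mult g u = v \<or> mult g v = u)"

text \<open>A walk given by its list of vertices; its length is the number of edges.\<close>
definition cayley_walk :: "('a \<Rightarrow> 'a \<Rightarrow> 'a) \<Rightarrow> 'a set \<Rightarrow> 'a \<Rightarrow> 'a list \<Rightarrow> 'a \<Rightarrow> bool" where
  "cayley_walk mult G s xs t \<longleftrightarrow> xs \<noteq> [] \<and> hd xs = s \<and> last xs = t \<and>
     (\<forall>x\<in>set xs. Lrel mult s x) \<and>
     (\<forall>i. Suc i < length xs \<longrightarrow> cayley_adj mult G s (xs ! i) (xs ! Suc i))"

definition cayley_dist :: "('a \<Rightarrow> 'a \<Rightarrow> 'a) \<Rightarrow> 'a set \<Rightarrow> 'a \<Rightarrow> 'a \<Rightarrow> enat" where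
  "cayley_dist mult G s t =
     (if Lrel mult s t
      then Inf {enat (length xs - 1) | xs. cayley_walk mult G s xs t}
      else \<infinity>)"

end

theory Submission
  imports Defs
begin

locale invsg =
  fixes mult :: "'a \<Rightarrow> 'a \<Rightarrow> 'a" (infixl "\<cdot>" 70)
  assumes isg: "inverse_semigroup mult"
begin

abbreviation iv where "iv \<equiv> sinv mult"
abbreviation ee where "ee s \<equiv> iv s \<cdot> s"

lemma assoc: "a \<cdot> b \<cdot> c = a \<cdot> (b \<cdot> c)"
  using isg unfolding inverse_semigroup_def by blast

lemma ex1: "\<exists>!t. s \<cdot> t \<cdot> s = s \<and> t \<cdot> s \<cdot> t = t"
  using isg unfolding inverse_semigroup_def by blast

lemma inv_props: "s \<cdot> iv s \<cdot> s = s \<and> iv s \<cdot> s \<cdot> iv s = iv s"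
  unfolding sinv_def by (rule theI'[OF ex1])

lemma inv1: "s \<cdot> iv s \<cdot> s = s" and inv2: "iv s \<cdot> s \<cdot> iv s = iv s"
  using inv_props by auto

lemma inv_uniq: "s \<cdot> t \<cdot> s = s \<Longrightarrow> t \<cdot> s \<cdot> t = t \<Longrightarrow> t = iv s"
  using ex1[of s] inv_props[of s] by blast

lemma inv_inv: "iv (iv s) = s"
  using inv_uniq[of "iv s" s] inv1 inv2 by simp

lemma inv_idem: "e \<cdot> e = e \<Longrightarrow> iv e = e"
  by (metis inv_uniq)

lemma ee_idem: "ee s \<cdot> ee s = ee s"
  by (metis assoc inv2)

lemma idem_prod: assumes e: "e \<cdot> e = e" and f: "f \<cdot> f = f"
  shows "(e \<cdot> f) \<cdot> (e \<cdot> f) = e \<cdot> f"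
proof -
  define x where "x = iv (e \<cdot> f)"
  have x1: "e \<cdot> f \<cdot> x \<cdot> (e \<cdot> f) = e \<cdot> f" and x2: "x \<cdot> (e \<cdot> f) \<cdot> x = x"
    using inv1 inv2 x_def by auto
  have a: "e \<cdot> f \<cdot> (f \<cdot> x \<cdot> e) \<cdot> (e \<cdot> f) = e \<cdot> f"
    using x1 e f by (metis assoc)
  have b: "f \<cdot> x \<cdot> e \<cdot> (e \<cdot> f) \<cdot> (f \<cdot> x \<cdot> e) = f \<cdot> x \<cdot> e"
  proof -
    have "f \<cdot> x \<cdot> e \<cdot> (e \<cdot> f) \<cdot> (f \<cdot> x \<cdot> e) = f \<cdot> (x \<cdot> (e \<cdot> f) \<cdot> x) \<cdot> e"
      using e f by (metis assoc)
    then show ?thesis using x2 by simp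
  qed
  have fxe: "f \<cdot> x \<cdot> e = x" using inv_uniq[OF a b] x_def by simp
  have "x \<cdot> x = x"
  proof -
    have "x \<cdot> x = f \<cdot> (x \<cdot> (e \<cdot> f) \<cdot> x) \<cdot> e"
      using fxe by (metis assoc)
    then show ?thesis using x2 fxe by simp
  qed
  then have "iv x = x" by (rule inv_idem)
  then have "e \<cdot> f = x" using inv_inv x_def by metis
  then show ?thesis using \<open>x \<cdot> x = x\<close> by simp
qed

lemma idem_comm: assumes e: "e \<cdot> e = e" and f: "f \<cdot> f = f"
  shows "e \<cdot> f = f \<cdot> e"
proof -
  have ef: "(e \<cdot> f) \<cdot> (e \<cdot> f) = e \<cdot> f" and fe: "(f \<cdot> e) \<cdot> (f \<cdot> e) = f \<cdot> e"
    using idem_prod e f by auto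
  have a: "e \<cdot> f \<cdot> (f \<cdot> e) \<cdot> (e \<cdot> f) = e \<cdot> f"
    using ef e f by (metis assoc)
  have b: "f \<cdot> e \<cdot> (e \<cdot> f) \<cdot> (f \<cdot> e) = f \<cdot> e"
    using fe e f by (metis assoc)
  have "f \<cdot> e = iv (e \<cdot> f)" by (rule inv_uniq[OF a b])
  also have "\<dots> = e \<cdot> f" using inv_idem[OF ef] .
  finally show ?thesis by simp
qed

lemma inv_prod: "iv (a \<cdot> b) = iv b \<cdot> iv a"
proof -
  have c: "b \<cdot> iv b \<cdot> (iv a \<cdot> a) = iv a \<cdot> a \<cdot> (b \<cdot> iv b)"
    using idem_comm[of "b \<cdot> iv b" "iv a \<cdot> a"] ee_idem[of a] ee_idem[of "iv b"] inv_inv[of b] by simp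
  have 1: "a \<cdot> b \<cdot> (iv b \<cdot> iv a) \<cdot> (a \<cdot> b) = a \<cdot> b"
  proof -
    have "a \<cdot> b \<cdot> (iv b \<cdot> iv a) \<cdot> (a \<cdot> b) = a \<cdot> (b \<cdot> iv b \<cdot> (iv a \<cdot> a)) \<cdot> b" by (simp add: assoc)
    also have "\<dots> = (a \<cdot> iv a \<cdot> a) \<cdot> (b \<cdot> iv b \<cdot> b)" using c by (simp add: assoc)
    finally show ?thesis using inv1 by simp
  qed
  have 2: "iv b \<cdot> iv a \<cdot> (a \<cdot> b) \<cdot> (iv b \<cdot> iv a) = iv b \<cdot> iv a"
  proof -
    have "iv b \<cdot> iv a \<cdot> (a \<cdot> b) \<cdot> (iv b \<cdot> iv a) = iv b \<cdot> (iv a \<cdot> a \<cdot> (b \<cdot> iv b)) \<cdot> iv a" by (simp add: assoc)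
    also have "\<dots> = (iv b \<cdot> b \<cdot> iv b) \<cdot> (iv a \<cdot> a \<cdot> iv a)" using c[symmetric] by (simp add: assoc)
    finally show ?thesis using inv2 by simp
  qed
  show ?thesis using inv_uniq[OF 1 2] by simp
qed

lemma ee_le: "s = a \<cdot> x \<Longrightarrow> ee s = ee s \<cdot> ee x"
proof -
  assume s: "s = a \<cdot> x"
  have "ee s \<cdot> ee x = iv s \<cdot> a \<cdot> (x \<cdot> iv x \<cdot> x)" using s by (simp add: assoc)
  then show ?thesis using inv1 s by (simp add: assoc)
qed

lemma ee_antisym: "ee s = ee s \<cdot> ee x \<Longrightarrow> ee x = ee x \<cdot> ee s \<Longrightarrow> ee s = ee x"
  using idem_comm[OF ee_idem ee_idem] by metis

lemma ee_trans: "ee s = ee s \<cdot> ee x \<Longrightarrow> ee x = ee x \<cdot> ee y \<Longrightarrow> ee s = ee s \<cdot> ee y"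
  by (metis assoc)

lemma idem_left_cancel: assumes e: "e \<cdot> e = e" and x: "x = e \<cdot> u" and l: "ee x = ee u"
  shows "x = u"
proof -
  have eeu: "e \<cdot> (e \<cdot> u) = e \<cdot> u" by (metis assoc e)
  have "ee x = iv u \<cdot> e \<cdot> u" using x inv_prod inv_idem[OF e] eeu by (simp add: assoc)
  then have "u = u \<cdot> (iv u \<cdot> e \<cdot> u)" using l inv1[of u] by (metis assoc)
  also have "\<dots> = (u \<cdot> iv u) \<cdot> e \<cdot> u" by (simp add: assoc)
  also have "\<dots> = e \<cdot> (u \<cdot> iv u) \<cdot> u"
    using idem_comm[OF _ e, of "u \<cdot> iv u"] ee_idem[of "iv u"] inv_inv[of u] by simp
  also have "\<dots> = e \<cdot> u" using inv1 by (simp add: assoc)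
  finally show ?thesis using x by simp
qed

lemma edge_sym: assumes u: "g \<cdot> v = u" and l: "ee u = ee v" shows "iv g \<cdot> u = v"
proof -
  define x where "x = iv g \<cdot> u"
  have xv: "x = (iv g \<cdot> g) \<cdot> v" using x_def u by (simp add: assoc)
  have 1: "ee x = ee x \<cdot> ee v" using ee_le[OF xv] .
  have "u = g \<cdot> x" using x_def u inv1 by (metis assoc)
  then have "ee u = ee u \<cdot> ee x" by (rule ee_le)
  then have 2: "ee v = ee v \<cdot> ee x" using l by simp
  have "ee x = ee v" using ee_antisym[OF 1 2] .
  then have "x = v" using idem_left_cancel[OF ee_idem xv] by simp
  then show ?thesis using x_def by simp
qed

lemma foldr_le: "s = foldr mult l t \<Longrightarrow> ee s = ee s \<cdot> ee t"
proof (induction l arbitrary: s)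
  case Nil then show ?case using ee_idem by simp
next
  case (Cons a l)
  then have "ee s = ee s \<cdot> ee (foldr mult l t)" using ee_le by simp
  then show ?case using Cons ee_trans by blast
qed


lemma Lrel_iff: "Lrel mult s t \<longleftrightarrow> ee s = ee t"
  by (simp add: Lrel_def)

lemma gen_foldr: "x \<in> generated mult X \<Longrightarrow> \<exists>l. set l \<subseteq> X \<and> x \<cdot> t = foldr mult l t"
proof (induction x arbitrary: t rule: generated.induct)
  case (gen_base x) then show ?case by (intro exI[of _ "[x]"]) simp
next
  case (gen_mult a b t)
  obtain lb where lb: "set lb \<subseteq> X" "b \<cdot> t = foldr mult lb t" using gen_mult.IH(2) by blast
  obtain la where la: "set la \<subseteq> X" "a \<cdot> (b \<cdot> t) = foldr mult la (b \<cdot> t)" using gen_mult.IH(1) by blast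
  show ?case using la lb by (intro exI[of _ "la @ lb"]) (simp add: assoc)
qed

lemma suffix_L: assumes "s = a \<cdot> x" "x = foldr mult l t" "ee s = ee t" shows "ee x = ee t"
proof -
  have 1: "ee s = ee s \<cdot> ee x" using ee_le assms(1) .
  have 2: "ee x = ee x \<cdot> ee t" using foldr_le assms(2) .
  show ?thesis using ee_antisym[OF 1] 2 assms(3) by metis
qed

lemma reduce: "set l \<subseteq> M \<union> idems mult \<Longrightarrow> s = foldr mult l t \<Longrightarrow> ee s = ee t \<Longrightarrow>
  \<exists>ms. set ms \<subseteq> M \<and> length ms \<le> length l \<and> s = foldr mult ms t"
proof (induction l arbitrary: s)
  case Nil then show ?case by (intro exI[of _ "[]"]) simp
next
  case (Cons a l)
  define x where "x = foldr mult l t"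
  have sx: "s = a \<cdot> x" using Cons.prems x_def by simp
  have xt: "ee x = ee t" using suffix_L[OF sx x_def Cons.prems(3)] .
  obtain ms where ms: "set ms \<subseteq> M" "length ms \<le> length l" "x = foldr mult ms t"
    using Cons.IH[OF _ x_def xt] Cons.prems(1) by auto
  show ?case
  proof (cases "a \<in> M")
    case True then show ?thesis using ms sx by (intro exI[of _ "a # ms"]) auto
  next
    case False
    then have "a \<cdot> a = a" using Cons.prems(1) by (auto simp: idems_def)
    then have "s = x" using idem_left_cancel[OF _ sx] xt Cons.prems(3) by simp
    then show ?thesis using ms by (intro exI[of _ ms]) auto
  qed
qed

lemma adj_base: "ee s = ee y \<Longrightarrow> cayley_adj mult G s u v = cayley_adj mult G y u v"
  by (simp add: cayley_adj_def Lrel_def)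

lemma walk_cons: assumes w: "cayley_walk mult G x xs t" and l: "ee s = ee x"
  and a: "cayley_adj mult G s s x"
  shows "cayley_walk mult G s (s # xs) t"
proof -
  have ne: "xs \<noteq> []" and hx: "hd xs = x" and lt: "last xs = t"
    and L: "\<forall>z\<in>set xs. ee x = ee z"
    and A: "\<forall>i. Suc i < length xs \<longrightarrow> cayley_adj mult G x (xs ! i) (xs ! Suc i)"
    using w by (auto simp: cayley_walk_def Lrel_def)
  have x0: "xs ! 0 = x" using ne hx by (simp add: hd_conv_nth)
  have "\<forall>i. Suc i < length (s # xs) \<longrightarrow> cayley_adj mult G s ((s # xs) ! i) ((s # xs) ! Suc i)"
  proof (intro allI impI)
    fix i assume i: "Suc i < length (s # xs)"
    show "cayley_adj mult G s ((s # xs) ! i) ((s # xs) ! Suc i)"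
    proof (cases i)
      case 0 then show ?thesis using a x0 by simp
    next
      case (Suc j) then show ?thesis using A i adj_base[OF l] by simp
    qed
  qed
  then show ?thesis using ne lt L l by (auto simp: cayley_walk_def Lrel_def)
qed

lemma walk_of_prod: "set ms \<subseteq> G \<Longrightarrow> s = foldr mult ms t \<Longrightarrow> ee s = ee t \<Longrightarrow>
  \<exists>xs. cayley_walk mult G s xs t \<and> length xs = length ms + 1"
proof (induction ms arbitrary: s)
  case Nil then show ?case by (intro exI[of _ "[s]"]) (simp add: cayley_walk_def Lrel_def)
next
  case (Cons m ms)
  define x where "x = foldr mult ms t"
  have sx: "s = m \<cdot> x" using Cons.prems x_def by simp
  have xt: "ee x = ee t" using suffix_L[OF sx x_def Cons.prems(3)] .
  obtain xs where xs: "cayley_walk mult G x xs t" "length xs = length ms + 1"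
    using Cons.IH[OF _ x_def xt] Cons.prems(1) by auto
  have mG: "m \<in> G" using Cons.prems(1) by simp
  have a: "cayley_adj mult G s s x" unfolding cayley_adj_def Lrel_def
    using mG xt Cons.prems(3) sx[symmetric] by metis
  show ?case using walk_cons[OF xs(1) _ a] xs(2) xt Cons.prems(3)
    by (intro exI[of _ "s # xs"]) simp
qed

lemma prod_of_walk: "iv ` G \<subseteq> G \<Longrightarrow> cayley_walk mult G s xs t \<Longrightarrow>
  \<exists>l. set l \<subseteq> G \<and> length l = length xs - 1 \<and> s = foldr mult l t"
proof (induction xs arbitrary: s)
  case Nil then show ?case by (simp add: cayley_walk_def)
next
  case (Cons a xs)
  have as: "a = s" using Cons.prems by (simp add: cayley_walk_def)
  show ?case
  proof (cases "xs = []")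
    case True then show ?thesis using Cons.prems as by (intro exI[of _ "[]"]) (simp add: cayley_walk_def)
  next
    case False
    then obtain y ys where Cons2: "xs = y # ys" by (cases xs) auto
    have ne: "last (a # xs) = t" and L: "\<forall>z\<in>set (a # xs). ee s = ee z"
      and A: "\<forall>i. Suc i < length (a # xs) \<longrightarrow> cayley_adj mult G s ((a # xs) ! i) ((a # xs) ! Suc i)"
      using Cons.prems(2) unfolding cayley_walk_def Lrel_def by blast+
    have sy: "ee s = ee y" using L Cons2 by auto
    have w: "cayley_walk mult G y xs t"
      unfolding cayley_walk_def Lrel_def
    proof (intro conjI allI impI ballI)
      show "xs \<noteq> []" "hd xs = y" using Cons2 by auto
      show "last xs = t" using ne Cons2 by simp
      fix z assume "z \<in> set xs" then show "ee y = ee z" using L sy by auto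
    next
      fix i assume i: "Suc i < length xs"
      have "cayley_adj mult G s ((a # xs) ! Suc i) ((a # xs) ! Suc (Suc i))" using A i by (metis Suc_less_eq length_Cons)
      then show "cayley_adj mult G y (xs ! i) (xs ! Suc i)" using adj_base[OF sy] by simp
    qed
    obtain l where l: "set l \<subseteq> G" "length l = length xs - 1" "y = foldr mult l t"
      using Cons.IH[OF Cons.prems(1) w] by blast
    have "Suc 0 < length (a # xs)" using Cons2 by simp
    then have "cayley_adj mult G s ((a # xs) ! 0) ((a # xs) ! Suc 0)" using A by blast
    then have "cayley_adj mult G s s y" using as Cons2 by simp
    then obtain g where g: "g \<in> G" "g \<cdot> s = y \<or> g \<cdot> y = s" and Lsy: "ee s = ee y"
      by (auto simp: cayley_adj_def Lrel_def)
    obtain h where h: "h \<in> G" "h \<cdot> y = s"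
    proof (cases "g \<cdot> y = s")
      case True then show ?thesis using that g by blast
    next
      case False
      then have "g \<cdot> s = y" using g by blast
      then have "iv g \<cdot> y = s" using edge_sym Lsy by metis
      then show ?thesis using that g Cons.prems(1) by blast
    qed
    show ?thesis using l h Cons2 by (intro exI[of _ "h # l"]) auto
  qed
qed


lemma dist_eq:
  assumes qg: "quasi_generating mult M" and G1: "M \<subseteq> G" and G2: "G \<subseteq> M \<union> idems mult"
    and G3: "iv ` G \<subseteq> G" and L: "Lrel mult s t"
  shows "(\<exists>k ms. length ms = k \<and> set ms \<subseteq> M \<and> s = foldr mult ms t) \<and>
    cayley_dist mult G s t =
      enat (LEAST k. \<exists>ms. length ms = k \<and> set ms \<subseteq> M \<and> s = foldr mult ms t)"
proof -
  let ?P = "\<lambda>k. \<exists>ms. length ms = k \<and> set ms \<subseteq> M \<and> s = foldr mult ms t"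
  have st: "ee s = ee t" using L by (simp add: Lrel_iff)
  have "s = s \<cdot> ee s" using inv1 by (simp add: assoc)
  then have s1: "s = (s \<cdot> iv t) \<cdot> t" using st by (simp add: assoc)
  have "s \<cdot> iv t \<in> generated mult (M \<union> idems mult)" using qg by (simp add: quasi_generating_def)
  then obtain l where l: "set l \<subseteq> M \<union> idems mult" "s \<cdot> iv t \<cdot> t = foldr mult l t"
    using gen_foldr by blast
  obtain ms where "set ms \<subseteq> M" "s = foldr mult ms t"
    using reduce[OF l(1) _ st] l(2) s1 by auto
  then have ex: "\<exists>k. ?P k" by blast
  define K where "K = (LEAST k. ?P k)"
  have PK: "?P K" using LeastI_ex[OF ex] K_def by simp
  define A where "A = {enat (length xs - 1) | xs. cayley_walk mult G s xs t}"
  have "cayley_dist mult G s t = Inf A" using L by (simp add: cayley_dist_def A_def)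
  moreover have "Inf A = enat K"
  proof (rule antisym)
    obtain ms where ms: "length ms = K" "set ms \<subseteq> M" "s = foldr mult ms t" using PK by blast
    obtain xs where "cayley_walk mult G s xs t" "length xs = length ms + 1"
      using walk_of_prod[OF _ ms(3) st] ms(2) G1 by blast
    then have "enat K \<in> A" using ms(1) A_def by force
    then show "Inf A \<le> enat K" by (rule Inf_lower)
  next
    show "enat K \<le> Inf A"
    proof (rule Inf_greatest)
      fix n assume "n \<in> A"
      then obtain xs where xs: "n = enat (length xs - 1)" "cayley_walk mult G s xs t"
        using A_def by blast
      obtain l where l: "set l \<subseteq> G" "length l = length xs - 1" "s = foldr mult l t"
        using prod_of_walk[OF G3 xs(2)] by blast
      obtain ms where ms: "set ms \<subseteq> M" "length ms \<le> length l" "s = foldr mult ms t"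
        using reduce[OF _ l(3) st] l(1) G2 by blast
      have "K \<le> length ms" unfolding K_def using ms by (intro Least_le) blast
      then show "enat K \<le> n" using xs(1) ms(2) l(2) by simp
    qed
  qed
  ultimately show ?thesis using ex K_def by simp
qed

end

theorem lemma1p15:
  fixes mult :: "'a \<Rightarrow> 'a \<Rightarrow> 'a" and M :: "'a set"
  assumes "inverse_semigroup mult"
    and "quasi_generating mult M"
  shows "cayley_dist mult (M \<union> idems mult) = cayley_dist mult M \<and>
         (\<forall>s t. Lrel mult s t \<longrightarrow>
           (\<exists>k ms. length ms = k \<and> set ms \<subseteq> M \<and> s = foldr mult ms t) \<and>
           cayley_dist mult M s t =
             enat (LEAST k. \<exists>ms. length ms = k \<and> set ms \<subseteq> M \<and> s = foldr mult ms t)) \<and>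
         (\<forall>s t. \<not> Lrel mult s t \<longrightarrow> cayley_dist mult M s t = \<infinity>)"
proof -
  interpret invsg mult by (rule invsg.intro) (rule assms(1))
  have iM: "sinv mult ` M \<subseteq> M" using assms(2) by (simp add: quasi_generating_def)
  have iME: "sinv mult ` (M \<union> idems mult) \<subseteq> M \<union> idems mult"
  proof
    fix y assume "y \<in> sinv mult ` (M \<union> idems mult)"
    then obtain x where x: "x \<in> M \<union> idems mult" "y = sinv mult x" by blast
    show "y \<in> M \<union> idems mult"
    proof (cases "x \<in> M")
      case True then show ?thesis using iM x by blast
    next
      case False then have "mult x x = x" using x by (simp add: idems_def)
      then show ?thesis using inv_idem x by simp
    qed
  qed
  have D1: "\<And>s t. Lrel mult s t \<Longrightarrow> (\<exists>k ms. length ms = k \<and> set ms \<subseteq> M \<and> s = foldr mult ms t) \<and>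
    cayley_dist mult M s t =
      enat (LEAST k. \<exists>ms. length ms = k \<and> set ms \<subseteq> M \<and> s = foldr mult ms t)"
    using dist_eq[OF assms(2) order_refl _ iM] by blast
  have D2: "\<And>s t. Lrel mult s t \<Longrightarrow>
    cayley_dist mult (M \<union> idems mult) s t =
      enat (LEAST k. \<exists>ms. length ms = k \<and> set ms \<subseteq> M \<and> s = foldr mult ms t)"
    using dist_eq[OF assms(2) _ order_refl iME] by blast
  have "cayley_dist mult (M \<union> idems mult) = cayley_dist mult M"
  proof (intro ext)
    fix s t show "cayley_dist mult (M \<union> idems mult) s t = cayley_dist mult M s t"
      using D1[of s t] D2[of s t] by (cases "Lrel mult s t") (auto simp: cayley_dist_def)
  qed
  then show ?thesis using D1 by (simp add: cayley_dist_def)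
qed

end
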